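(* Let $X$ be an infinite dimensional separable Banach space and $T:X\to X$ a continuous linear operator. The following are equivalent: (1) for every $\delta>0$, $(X,T)$ is transitively sensitive with sensitive constant $\delta$; (2) there exists $\delta_0>0$ such that $(X,T)$ is transitively sensitive with sensitive constant $\delta_0$; (3) there exists $\delta_0>0$ such that $S_T(W_0,\delta_0)\cap N_T(U,V)\neq\varnothing$ for all nonempty open $U,V\subset X$ and every neighbourhood $W_0$ of $0$.
   Context: $N_T(U,V)=\{n\in\mathbb{Z}_+:U\cap T^{-n}V\neq\varnothing\}$ and $S_T(W,\delta)=\{n\in\mathbb{Z}_+:\exists x_1,x_2\in W,\ \|T^nx_1-T^nx_2\|>\delta\}$. $(X,T)$ is transitively sensitive with sensitive constant $\delta$ if $S_T(W,\delta)\cap N_T(U,V)\neq\varnothing$ for all nonempty open $U,V,W\subset X$. *)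

theory Defs
  imports "HOL-Analysis.Analysis"
begin

definition hitting_times :: "('a \<Rightarrow> 'a) \<Rightarrow> 'a set \<Rightarrow> 'a set \<Rightarrow> nat set" where
  "hitting_times T U V = {n. U \<inter> (T ^^ n) -` V \<noteq> {}}"

definition sensitive_times :: "('a::real_normed_vector \<Rightarrow> 'a) \<Rightarrow> 'a set \<Rightarrow> real \<Rightarrow> nat set" where
  "sensitive_times T W \<delta> =
     {n. \<exists>x1\<in>W. \<exists>x2\<in>W. norm ((T ^^ n) x1 - (T ^^ n) x2) > \<delta>}"

definition transitively_sensitive :: "('a::real_normed_vector \<Rightarrow> 'a) \<Rightarrow> real \<Rightarrow> bool" where
  "transitively_sensitive T \<delta> \<longleftrightarrow>
     (\<forall>U V W. open U \<longrightarrow> U \<noteq> {} \<longrightarrow> open V \<longrightarrow> V \<noteq> {} \<longrightarrow> open W \<longrightarrow> W \<noteq> {} \<longrightarrow>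
        sensitive_times T W \<delta> \<inter> hitting_times T U V \<noteq> {})"

definition separable_space :: "'a::topological_space itself \<Rightarrow> bool" where
  "separable_space _ \<longleftrightarrow> (\<exists>D::'a set. countable D \<and> closure D = UNIV)"

end

theory Submission
  imports Defs
begin

lemma lin_pow: "linear (T::'a::real_vector\<Rightarrow>'a) \<Longrightarrow> linear (T ^^ n)"
proof (induction n)
  case 0
  have "linear (\<lambda>x::'a. x)" by (rule linearI) simp_all
  thus ?case by (simp add: id_def)
next
  case (Suc n)
  have "linear (T \<circ> T ^^ n)" by (rule linear_compose[OF Suc.IH[OF Suc.prems] Suc.prems])
  thus ?case by (simp only: funpow.simps)
qed

lemma ts_D:
  assumes "transitively_sensitive T d" "open U" "U \<noteq> {}" "open V" "V \<noteq> {}" "open W" "W \<noteq> {}"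
  shows "sensitive_times T W d \<inter> hitting_times T U V \<noteq> {}"
  using assms unfolding transitively_sensitive_def by simp

lemma scale_ts:
  fixes T :: "'a::real_normed_vector \<Rightarrow> 'a"
  assumes lin: "linear T" and ts: "transitively_sensitive T d0" and d0: "d0 > 0" and d: "d > 0"
  shows "transitively_sensitive T d"
  unfolding transitively_sensitive_def
proof (intro allI impI)
  fix U V W :: "'a set"
  assume U: "open U" "U \<noteq> {}" and V: "open V" "V \<noteq> {}" and W: "open W" "W \<noteq> {}"
  obtain w where w: "w \<in> W" using W by auto
  define c where "c = d / d0"
  have c: "c > 0" using d d0 by (simp add: c_def)
  define f where "f = (\<lambda>y. w + c *\<^sub>R (y - w))"
  define W' where "W' = f -` W"
  have cf: "continuous_on UNIV f" unfolding f_def by (intro continuous_intros)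
  have "open W'" unfolding W'_def using open_vimage[OF W(1) cf] .
  moreover have "w \<in> W'" using w by (simp add: W'_def f_def)
  ultimately obtain n where n: "n \<in> sensitive_times T W' d0" "n \<in> hitting_times T U V"
    using ts_D[OF ts U V \<open>open W'\<close>] \<open>w \<in> W'\<close> by blast
  then obtain x1 x2 where x: "x1 \<in> W'" "x2 \<in> W'" "norm ((T ^^ n) x1 - (T ^^ n) x2) > d0"
    unfolding sensitive_times_def by auto
  have L: "linear (T ^^ n)" using lin_pow[OF lin] .
  have "f x1 - f x2 = c *\<^sub>R (x1 - x2)" by (simp add: f_def algebra_simps)
  hence "(T ^^ n) (f x1) - (T ^^ n) (f x2) = c *\<^sub>R ((T ^^ n) x1 - (T ^^ n) x2)"
    by (metis L linear_diff linear_scale)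
  hence "norm ((T ^^ n) (f x1) - (T ^^ n) (f x2)) = c * norm ((T ^^ n) x1 - (T ^^ n) x2)"
    using c by simp
  also have "\<dots> > c * d0" using x(3) c by simp
  also have "c * d0 = d" using d0 by (simp add: c_def)
  finally have nd: "d < norm ((T ^^ n) (f x1) - (T ^^ n) (f x2))" .
  have "f x1 \<in> W" "f x2 \<in> W" using x(1,2) by (auto simp: W'_def)
  hence "n \<in> sensitive_times T W d"
    unfolding sensitive_times_def mem_Collect_eq using nd by blast
  thus "sensitive_times T W d \<inter> hitting_times T U V \<noteq> {}" using n(2) by blast
qed

lemma nbhd_ts:
  fixes T :: "'a::real_normed_vector \<Rightarrow> 'a"
  assumes lin: "linear T" and H: "\<forall>U V W0. open U \<longrightarrow> U \<noteq> {} \<longrightarrow> open V \<longrightarrow> V \<noteq> {} \<longrightarrow>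
              (\<exists>G. open G \<and> 0 \<in> G \<and> G \<subseteq> W0) \<longrightarrow> sensitive_times T W0 d \<inter> hitting_times T U V \<noteq> {}"
  shows "transitively_sensitive T d"
  unfolding transitively_sensitive_def
proof (intro allI impI)
  fix U V W :: "'a set"
  assume U: "open U" "U \<noteq> {}" and V: "open V" "V \<noteq> {}" and W: "open W" "W \<noteq> {}"
  obtain w where w: "w \<in> W" using W by auto
  define W0 where "W0 = (\<lambda>y. w + y) -` W"
  have cf: "continuous_on UNIV (\<lambda>y. w + y)" by (intro continuous_intros)
  have "open W0" unfolding W0_def using open_vimage[OF W(1) cf] .
  moreover have "0 \<in> W0" using w by (simp add: W0_def)
  ultimately obtain n where n: "n \<in> sensitive_times T W0 d" "n \<in> hitting_times T U V"
    using H[rule_format, OF U V, of W0] \<open>open W0\<close> by blast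
  then obtain x1 x2 where x: "x1 \<in> W0" "x2 \<in> W0" "norm ((T ^^ n) x1 - (T ^^ n) x2) > d"
    unfolding sensitive_times_def by auto
  have L: "linear (T ^^ n)" using lin_pow[OF lin] .
  have eq: "(T ^^ n) (w + x1) - (T ^^ n) (w + x2) = (T ^^ n) x1 - (T ^^ n) x2"
    by (simp add: L linear_add)
  moreover have "w + x1 \<in> W" "w + x2 \<in> W" using x(1,2) by (auto simp: W0_def)
  ultimately have "n \<in> sensitive_times T W d"
    unfolding sensitive_times_def mem_Collect_eq
  proof (intro bexI)
    show "d < norm ((T ^^ n) (w + x1) - (T ^^ n) (w + x2))" using eq x(3) by simp
  qed
  thus "sensitive_times T W d \<inter> hitting_times T U V \<noteq> {}" using n(2) by blast
qed

lemma mono_st: "W \<subseteq> W0 \<Longrightarrow> sensitive_times T W d \<subseteq> sensitive_times T W0 d"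
  unfolding sensitive_times_def by blast

theorem proposition7p3:
  fixes T :: "'a::banach \<Rightarrow> 'a"
  assumes sep: "separable_space TYPE('a)"
    and infdim: "\<not> (\<exists>B::'a set. finite B \<and> span B = UNIV)"
    and lin: "bounded_linear T"
  shows "((\<forall>\<delta>>0. transitively_sensitive T \<delta>) \<longleftrightarrow> (\<exists>\<delta>0>0. transitively_sensitive T \<delta>0))
       \<and> ((\<exists>\<delta>0>0. transitively_sensitive T \<delta>0) \<longleftrightarrow>
          (\<exists>\<delta>0>0. \<forall>U V W0. open U \<longrightarrow> U \<noteq> {} \<longrightarrow> open V \<longrightarrow> V \<noteq> {} \<longrightarrow>
              (\<exists>G. open G \<and> 0 \<in> G \<and> G \<subseteq> W0) \<longrightarrow> sensitive_times T W0 \<delta>0 \<inter> hitting_times T U V \<noteq> {}))"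
proof -
  have L: "linear T" using lin bounded_linear.linear by blast
  have A: "(\<forall>\<delta>>0. transitively_sensitive T \<delta>) \<longleftrightarrow> (\<exists>\<delta>0>0. transitively_sensitive T \<delta>0)"
  proof
    assume "\<forall>\<delta>>0. transitively_sensitive T \<delta>"
    hence "transitively_sensitive T 1" by simp
    thus "\<exists>\<delta>0>0. transitively_sensitive T \<delta>0" using zero_less_one by blast
  next
    assume "\<exists>\<delta>0>0. transitively_sensitive T \<delta>0"
    then obtain d0 where d0: "d0 > 0" and t0: "transitively_sensitive T d0" by blast
    show "\<forall>\<delta>>0. transitively_sensitive T \<delta>" using scale_ts[OF L t0 d0] by blast
  qed
  have B1: "transitively_sensitive T d \<Longrightarrow> \<forall>U V W0. open U \<longrightarrow> U \<noteq> {} \<longrightarrow> open V \<longrightarrow> V \<noteq> {} \<longrightarrow>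
              (\<exists>G. open G \<and> 0 \<in> G \<and> G \<subseteq> W0) \<longrightarrow> sensitive_times T W0 d \<inter> hitting_times T U V \<noteq> {}" for d
  proof (intro allI impI)
    fix U V W0 :: "'a set"
    assume ts: "transitively_sensitive T d" and U: "open U" "U \<noteq> {}" and V: "open V" "V \<noteq> {}"
      and G: "\<exists>G. open G \<and> 0 \<in> G \<and> G \<subseteq> W0"
    then obtain G where G: "open G" "0 \<in> G" "G \<subseteq> W0" by blast
    have "sensitive_times T G d \<inter> hitting_times T U V \<noteq> {}"
      using ts_D[OF ts U V G(1)] G(2) by blast
    thus "sensitive_times T W0 d \<inter> hitting_times T U V \<noteq> {}" using mono_st[OF G(3)] by blast
  qed
  have B: "(\<exists>\<delta>0>0. transitively_sensitive T \<delta>0) \<longleftrightarrow>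
          (\<exists>\<delta>0>0. \<forall>U V W0. open U \<longrightarrow> U \<noteq> {} \<longrightarrow> open V \<longrightarrow> V \<noteq> {} \<longrightarrow>
              (\<exists>G. open G \<and> 0 \<in> G \<and> G \<subseteq> W0) \<longrightarrow> sensitive_times T W0 \<delta>0 \<inter> hitting_times T U V \<noteq> {})"
  proof
    assume "\<exists>\<delta>0>0. transitively_sensitive T \<delta>0"
    then obtain d where dd: "d > 0" and tsd: "transitively_sensitive T d" by blast
    thus "\<exists>\<delta>0>0. \<forall>U V W0. open U \<longrightarrow> U \<noteq> {} \<longrightarrow> open V \<longrightarrow> V \<noteq> {} \<longrightarrow>
              (\<exists>G. open G \<and> 0 \<in> G \<and> G \<subseteq> W0) \<longrightarrow> sensitive_times T W0 \<delta>0 \<inter> hitting_times T U V \<noteq> {}"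
      using B1[OF tsd] dd by blast
  next
    assume "\<exists>\<delta>0>0. \<forall>U V W0. open U \<longrightarrow> U \<noteq> {} \<longrightarrow> open V \<longrightarrow> V \<noteq> {} \<longrightarrow>
              (\<exists>G. open G \<and> 0 \<in> G \<and> G \<subseteq> W0) \<longrightarrow> sensitive_times T W0 \<delta>0 \<inter> hitting_times T U V \<noteq> {}"
    then obtain d where d: "d > 0" and H: "\<forall>U V W0. open U \<longrightarrow> U \<noteq> {} \<longrightarrow> open V \<longrightarrow> V \<noteq> {} \<longrightarrow>
              (\<exists>G. open G \<and> 0 \<in> G \<and> G \<subseteq> W0) \<longrightarrow> sensitive_times T W0 d \<inter> hitting_times T U V \<noteq> {}"
      by blast
    show "\<exists>\<delta>0>0. transitively_sensitive T \<delta>0"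
      using d nbhd_ts[OF L H] by blast
  qed
  show ?thesis using A B by (rule conjI)
qed

end
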